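(* Let $G=(V,E)$ be a finite simple undirected graph with $N\ge1$ vertices and put $G_0=G$. Then there exists a sequence of induced subgraphs $G_0\supseteq G_1\supseteq\cdots\supseteq G_N$, where $G_N$ is the graph with no vertices and, for each $i=0,\dots,N-1$, $G_{i+1}$ is obtained from $G_i$ by deleting one vertex, such that $C(G_i)\ge C(G_{i+1})$ for all $i=0,\dots,N-1$.
   Context: For a vertex $u$ of a graph, $d_u$ is its degree and $T(u)$ the number of triangles containing $u$; the local clustering coefficient is $C(u)=\frac{2T(u)}{d_u(d_u-1)}$ if $d_u>1$ and $C(u)=0$ otherwise. The average clustering coefficient of a graph $H$ with $n\ge1$ vertices is $C(H)=\frac1n\sum_{u\in V(H)}C(u)$ (local coefficients computed in $H$); by convention the graph with no vertices has $C=0$. *)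

theory Defs
  imports Complex_Main
begin

definition simple_graph :: "'a set \<Rightarrow> ('a \<Rightarrow> 'a \<Rightarrow> bool) \<Rightarrow> bool" where
  "simple_graph V E \<longleftrightarrow> finite V \<and> (\<forall>u v. E u v \<longrightarrow> E v u) \<and> (\<forall>u. \<not> E u u)"

definition ind_degree :: "('a \<Rightarrow> 'a \<Rightarrow> bool) \<Rightarrow> 'a set \<Rightarrow> 'a \<Rightarrow> nat" where
  "ind_degree E S u = card {v \<in> S. E u v}"

definition ind_triangles :: "('a \<Rightarrow> 'a \<Rightarrow> bool) \<Rightarrow> 'a set \<Rightarrow> 'a \<Rightarrow> nat" where
  "ind_triangles E S u =
     card {{v, w} | v w. v \<in> S \<and> w \<in> S \<and> E u v \<and> E u w \<and> E v w}"

definition local_clust :: "('a \<Rightarrow> 'a \<Rightarrow> bool) \<Rightarrow> 'a set \<Rightarrow> 'a \<Rightarrow> real" where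
  "local_clust E S u =
     (if ind_degree E S u > 1
      then 2 * real (ind_triangles E S u)
             / (real (ind_degree E S u) * (real (ind_degree E S u) - 1))
      else 0)"

definition avg_clust :: "('a \<Rightarrow> 'a \<Rightarrow> bool) \<Rightarrow> 'a set \<Rightarrow> real" where
  "avg_clust E S =
     (if S = {} then 0 else (\<Sum>u\<in>S. local_clust E S u) / real (card S))"

end

theory Submission
  imports Defs
begin

definition tri_set :: "('a \<Rightarrow> 'a \<Rightarrow> bool) \<Rightarrow> 'a set \<Rightarrow> 'a \<Rightarrow> 'a set set" where
  "tri_set E S u = {{v, w} | v w. v \<in> S \<and> w \<in> S \<and> E u v \<and> E u w \<and> E v w}"

definition nbr :: "('a \<Rightarrow> 'a \<Rightarrow> bool) \<Rightarrow> 'a set \<Rightarrow> 'a \<Rightarrow> 'a set" where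
  "nbr E S u = {v\<in>S. E u v}"

lemma tri_card: "ind_triangles E S u = card (tri_set E S u)"
  by (simp add: ind_triangles_def tri_set_def)

lemma deg_card: "ind_degree E S u = card (nbr E S u)"
  by (simp add: ind_degree_def nbr_def)

lemma tri_sub: "tri_set E S u \<subseteq> Pow (nbr E S u)"
  by (auto simp: tri_set_def nbr_def)

lemma tri_fin: "finite S \<Longrightarrow> finite (tri_set E S u)"
  by (rule finite_subset[OF tri_sub]) (simp add: nbr_def)

lemma tri_del: "tri_set E (S-{x}) u = {p\<in>tri_set E S u. x\<notin>p}"
  unfolding tri_set_def by blast

lemma nbr_del: "nbr E (S-{x}) u = nbr E S u - {x}"
  unfolding nbr_def by blast

lemma card_tri_del:
  assumes "finite S"
  shows "card (tri_set E (S-{x}) u) + card {p\<in>tri_set E S u. x\<in>p} = card (tri_set E S u)"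
proof -
  define T where "T = tri_set E S u"
  have fT: "finite T" unfolding T_def using assms by (rule tri_fin)
  have "card {p\<in>T. x\<notin>p} + card {p\<in>T. x\<in>p} = card T"
  proof -
    have u: "T = {p\<in>T. x\<notin>p} \<union> {p\<in>T. x\<in>p}" by auto
    have "card ({p\<in>T. x\<notin>p} \<union> {p\<in>T. x\<in>p}) = card {p\<in>T. x\<notin>p} + card {p\<in>T. x\<in>p}"
      by (rule card_Un_disjoint) (use fT in auto)
    then show ?thesis using u by metis
  qed
  then show ?thesis unfolding T_def tri_del .
qed

lemma tri_two:
  assumes "\<forall>v. \<not> E v v" "p \<in> tri_set E S u"
  shows "card p = 2"
proof -
  obtain v w where "p = {v,w}" "E v w" using assms(2) unfolding tri_set_def by blast
  moreover have "v \<noteq> w" using assms(1) \<open>E v w\<close> by blast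
  ultimately show ?thesis by simp
qed

lemma double_count:
  assumes "\<forall>v. \<not> E v v" "finite S"
  shows "(\<Sum>x\<in>nbr E S u. card {p\<in>tri_set E S u. x\<in>p}) = 2 * card (tri_set E S u)"
proof -
  let ?N = "nbr E S u" and ?T = "tri_set E S u"
  have fN: "finite ?N" using assms by (simp add: nbr_def)
  have fT: "finite ?T" using assms(2) by (rule tri_fin)
  have "(\<Sum>x\<in>?N. card {p\<in>?T. x\<in>p}) = (\<Sum>x\<in>?N. \<Sum>p\<in>?T. if x\<in>p then 1 else 0)"
  proof (rule sum.cong[OF refl])
    fix x
    show "card {p\<in>?T. x\<in>p} = (\<Sum>p\<in>?T. if x\<in>p then 1 else 0)"
      using sum.inter_filter[OF fT, of "\<lambda>_. 1::nat" "\<lambda>p. x\<in>p"] by simp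
  qed
  also have "\<dots> = (\<Sum>p\<in>?T. \<Sum>x\<in>?N. if x\<in>p then 1 else 0)"
    by (rule sum.swap)
  also have "\<dots> = (\<Sum>p\<in>?T. 2)"
  proof (rule sum.cong)
    fix p assume p: "p \<in> ?T"
    have "(\<Sum>x\<in>?N. if x\<in>p then 1 else 0) = card {x\<in>?N. x\<in>p}"
      using sum.inter_filter[OF fN, of "\<lambda>_. 1::nat" "\<lambda>x. x\<in>p"] by simp
    also have "{x\<in>?N. x\<in>p} = p"
    proof -
      have "p \<subseteq> ?N" using subsetD[OF tri_sub p] by simp
      then show ?thesis by auto
    qed
    finally show "(\<Sum>x\<in>?N. if x\<in>p then 1 else 0) = (2::nat)"
      using tri_two[of E p S u, OF assms(1) p] by simp
  qed simp
  finally show ?thesis by simp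
qed

lemma lc_nonneg: "local_clust E S u \<ge> 0"
  unfolding local_clust_def by auto

lemma avg_nonneg: "avg_clust E S \<ge> 0"
  unfolding avg_clust_def by (auto intro!: sum_nonneg divide_nonneg_nonneg lc_nonneg)

lemma lc_nonnbr:
  assumes "\<not> E u x"
  shows "local_clust E (S-{x}) u = local_clust E S u"
proof -
  have "nbr E (S-{x}) u = nbr E S u" using assms by (auto simp: nbr_def)
  moreover have "tri_set E (S-{x}) u = tri_set E S u"
    using assms by (auto simp: tri_set_def)
  ultimately show ?thesis by (simp add: local_clust_def tri_card deg_card)
qed

lemma aux: "(D::real) \<ge> 3 \<Longrightarrow> 2*(D*t - 2*t)/((D-1)*(D-2)) = D*(2*t/(D*(D-1)))"
proof -
  assume D: "D \<ge> 3"
  have a: "D*t - 2*t = (D-2)*t" by (simp add: algebra_simps)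
  have "2*((D-2)*t)/((D-1)*(D-2)) = 2*t/(D-1)" using D by simp
  moreover have "D*(2*t/(D*(D-1))) = 2*t/(D-1)" using D by simp
  ultimately show ?thesis using a by simp
qed

lemma lc_nbr_sum:
  assumes "\<forall>v. \<not> E v v" "finite S"
  shows "(\<Sum>x\<in>nbr E S u. local_clust E (S-{x}) u) \<le> real (card (nbr E S u)) * local_clust E S u"
proof -
  let ?N = "nbr E S u" and ?T = "tri_set E S u"
  define d where "d = card ?N"
  have fN: "finite ?N" using assms by (simp add: nbr_def)
  show ?thesis
  proof (cases "d \<ge> 3")
    case False
    have "(\<Sum>x\<in>?N. local_clust E (S-{x}) u) = 0"
    proof (rule sum.neutral, intro ballI)
      fix x assume x: "x \<in> ?N"
      have "card (nbr E (S-{x}) u) = d - 1" using x fN by (simp add: nbr_del d_def)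
      then show "local_clust E (S-{x}) u = 0" using False
        by (simp add: local_clust_def deg_card)
    qed
    then show ?thesis using lc_nonneg[of E S u] by simp
  next
    case True
    define D where "D = real d"
    have D3: "D \<ge> 3" using True by (simp add: D_def)
    have each: "local_clust E (S-{x}) u
        = 2 * (real (card ?T) - real (card {p\<in>?T. x\<in>p})) / ((D-1)*(D-2))" if x: "x \<in> ?N" for x
    proof -
      have c: "card (nbr E (S-{x}) u) = d - 1" using x fN by (simp add: nbr_del d_def)
      have r: "real (d - 1) = D - 1" using True by (simp add: D_def)
      have t: "real (card (tri_set E (S-{x}) u)) = real (card ?T) - real (card {p\<in>?T. x\<in>p})"
        using card_tri_del[OF assms(2), of E x u] by linarith
      have dd: "real (card (nbr E (S-{x}) u)) = D - 1" using c r by simp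
      have gt: "card (nbr E (S-{x}) u) > 1" using c True by simp
      have "local_clust E (S-{x}) u = 2 * real (card (tri_set E (S-{x}) u)) / ((D-1)*((D-1)-1))"
        unfolding local_clust_def deg_card tri_card using gt dd by simp
      also have "(D-1)-1 = D-2" by simp
      finally show ?thesis unfolding t .
    qed
    have "(\<Sum>x\<in>?N. local_clust E (S-{x}) u)
        = (\<Sum>x\<in>?N. 2 * (real (card ?T) - real (card {p\<in>?T. x\<in>p})) / ((D-1)*(D-2)))"
      using each by (rule sum.cong[OF refl])
    also have "\<dots> = 2 * (D * real (card ?T) - real (\<Sum>x\<in>?N. card {p\<in>?T. x\<in>p})) / ((D-1)*(D-2))"
    proof -
      have s1: "(\<Sum>x\<in>?N. 2 * (real (card ?T) - real (card {p\<in>?T. x\<in>p})) / ((D-1)*(D-2)))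
          = 2 * (\<Sum>x\<in>?N. real (card ?T) - real (card {p\<in>?T. x\<in>p})) / ((D-1)*(D-2))"
        by (simp only: sum_divide_distrib sum_distrib_left)
      have s2: "(\<Sum>x\<in>?N. real (card ?T) - real (card {p\<in>?T. x\<in>p}))
          = D * real (card ?T) - real (\<Sum>x\<in>?N. card {p\<in>?T. x\<in>p})"
        by (simp add: sum_subtractf of_nat_sum D_def d_def)
      show ?thesis using s1 s2 by simp
    qed
    also have "\<dots> = 2 * (D * real (card ?T) - 2 * real (card ?T)) / ((D-1)*(D-2))"
      using double_count[of E S u, OF assms] by simp
    also have "\<dots> = D * (2 * real (card ?T) / (D * (D - 1)))"
      using D3 by (rule aux)
    also have "\<dots> = real (card ?N) * local_clust E S u"
      using True by (simp add: local_clust_def deg_card tri_card D_def d_def)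
    finally show ?thesis by simp
  qed
qed

lemma lc_vertex_sum:
  assumes "\<forall>v. \<not> E v v" "finite S" "u \<in> S"
  shows "(\<Sum>x\<in>S-{u}. local_clust E (S-{x}) u) \<le> (real (card S) - 1) * local_clust E S u"
proof -
  let ?N = "nbr E S u"
  have sub: "?N \<subseteq> S - {u}" using assms(1) by (auto simp: nbr_def)
  have fin: "finite (S-{u})" using assms by simp
  have split: "(\<Sum>x\<in>S-{u}. local_clust E (S-{x}) u)
     = (\<Sum>x\<in>?N. local_clust E (S-{x}) u) + (\<Sum>x\<in>S-{u}-?N. local_clust E (S-{x}) u)"
    using sum.subset_diff[OF sub fin] by (simp add: add.commute)
  have "(\<Sum>x\<in>S-{u}-?N. local_clust E (S-{x}) u) = (\<Sum>x\<in>S-{u}-?N. local_clust E S u)"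
    by (rule sum.cong) (auto simp: nbr_def intro: lc_nonnbr)
  also have "\<dots> = real (card (S-{u}-?N)) * local_clust E S u" by simp
  finally have nn: "(\<Sum>x\<in>S-{u}-?N. local_clust E (S-{x}) u) = real (card (S-{u}-?N)) * local_clust E S u" .
  have cc: "real (card (S-{u}-?N)) + real (card ?N) = real (card S) - 1"
  proof -
    have "card (S-{u}-?N) + card ?N = card (S-{u})"
      using card_Diff_subset[OF finite_subset[OF sub fin] sub] card_mono[OF fin sub] by simp
    moreover have "card (S-{u}) = card S - 1" using assms by simp
    moreover have "card S \<ge> 1" using assms by (auto simp: Suc_le_eq card_gt_0_iff)
    ultimately show ?thesis by (simp add: of_nat_diff)
  qed
  have e: "(real (card S) - 1) * local_clust E S u = real (card (S-{u}-?N)) * local_clust E S u + real (card ?N) * local_clust E S u"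
    by (simp add: cc[symmetric] distrib_right)
  show ?thesis using split nn lc_nbr_sum[of E S u, OF assms(1,2)] e by linarith
qed

lemma exists_del:
  assumes "\<forall>v. \<not> E v v" "finite S" "S \<noteq> {}"
  shows "\<exists>x\<in>S. avg_clust E (S-{x}) \<le> avg_clust E S"
proof (cases "card S = 1")
  case True
  then obtain x where "S = {x}" by (auto simp: card_Suc_eq)
  then show ?thesis using avg_nonneg[of E S] by (simp add: avg_clust_def)
next
  case False
  define n where "n = real (card S)"
  have n2: "card S \<ge> 2" using False assms proof -
    have "card S > 0" using assms by (auto simp: card_gt_0_iff)
    then show ?thesis using False by linarith
  qed
  have nr: "n \<ge> 2" using n2 by (simp add: n_def)
  let ?T = "\<Sum>u\<in>S. local_clust E S u"
  have avgx: "avg_clust E (S-{x}) = (\<Sum>u\<in>S-{x}. local_clust E (S-{x}) u) / (n - 1)" if "x \<in> S" for x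
  proof -
    have "card (S - {x}) \<ge> 1" using that n2 assms(2) by simp
    then have "S - {x} \<noteq> {}" by (metis card.empty not_one_le_zero)
    then show ?thesis using that assms n2 by (simp add: avg_clust_def n_def of_nat_diff)
  qed
  have "(\<Sum>x\<in>S. \<Sum>u\<in>S-{x}. local_clust E (S-{x}) u) = (\<Sum>x\<in>S. \<Sum>u\<in>S. if u \<noteq> x then local_clust E (S-{x}) u else 0)"
  proof (rule sum.cong[OF refl])
    fix x assume "x \<in> S"
    have "S - {x} = {u\<in>S. u \<noteq> x}" by auto
    then show "(\<Sum>u\<in>S-{x}. local_clust E (S-{x}) u) = (\<Sum>u\<in>S. if u \<noteq> x then local_clust E (S-{x}) u else 0)"
      using sum.inter_filter[OF assms(2), of "local_clust E (S-{x})" "\<lambda>u. u \<noteq> x"] by metis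
  qed
  also have "\<dots> = (\<Sum>u\<in>S. \<Sum>x\<in>S. if u \<noteq> x then local_clust E (S-{x}) u else 0)"
    by (rule sum.swap)
  also have "\<dots> = (\<Sum>u\<in>S. \<Sum>x\<in>S-{u}. local_clust E (S-{x}) u)"
  proof (rule sum.cong[OF refl])
    fix u assume "u \<in> S"
    have "S - {u} = {x\<in>S. u \<noteq> x}" by auto
    then show "(\<Sum>x\<in>S. if u \<noteq> x then local_clust E (S-{x}) u else 0) = (\<Sum>x\<in>S-{u}. local_clust E (S-{x}) u)"
      using sum.inter_filter[OF assms(2), of "\<lambda>x. local_clust E (S-{x}) u" "\<lambda>x. u \<noteq> x"] by metis
  qed
  also have "\<dots> \<le> (\<Sum>u\<in>S. (n - 1) * local_clust E S u)"
    by (rule sum_mono) (use lc_vertex_sum[of E S] assms(1,2) n_def in auto)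
  finally have tot: "(\<Sum>x\<in>S. \<Sum>u\<in>S-{x}. local_clust E (S-{x}) u) \<le> (n-1) * ?T"
    by (simp add: sum_distrib_left)
  have "(\<Sum>x\<in>S. avg_clust E (S-{x})) = (\<Sum>x\<in>S. \<Sum>u\<in>S-{x}. local_clust E (S-{x}) u) / (n - 1)"
    by (simp add: avgx sum_divide_distrib)
  also have "\<dots> \<le> ?T" using tot nr by (simp add: divide_le_eq mult.commute)
  also have "\<dots> = (\<Sum>x\<in>S. avg_clust E S)" using assms nr by (simp add: avg_clust_def n_def)
  finally have le: "(\<Sum>x\<in>S. avg_clust E (S-{x})) \<le> (\<Sum>x\<in>S. avg_clust E S)" .
  show ?thesis
  proof (rule ccontr)
    assume "\<not> ?thesis"
    then have "\<forall>x\<in>S. avg_clust E S < avg_clust E (S-{x})" by auto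
    then have "(\<Sum>x\<in>S. avg_clust E S) < (\<Sum>x\<in>S. avg_clust E (S-{x}))"
      using assms by (intro sum_strict_mono) auto
    then show False using le by simp
  qed
qed

lemma seq_exists:
  assumes "\<forall>v. \<not> E v v"
  shows "finite S \<Longrightarrow> card S = n \<Longrightarrow> \<exists>G :: nat \<Rightarrow> 'a set.
           G 0 = S \<and> G n = {} \<and>
           (\<forall>i<n. \<exists>x\<in>G i. G (Suc i) = G i - {x}) \<and>
           (\<forall>i<n. avg_clust E (G i) \<ge> avg_clust E (G (Suc i)))"
proof (induction n arbitrary: S)
  case 0
  then show ?case by (intro exI[of _ "\<lambda>_. {}"]) auto
next
  case (Suc n)
  then have ne: "S \<noteq> {}" by auto
  obtain x where x: "x \<in> S" "avg_clust E (S-{x}) \<le> avg_clust E S"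
    using exists_del[of E S] assms Suc.prems(1) ne by blast
  obtain G where G: "G 0 = S - {x}" "G n = {}"
     "\<forall>i<n. \<exists>y\<in>G i. G (Suc i) = G i - {y}"
     "\<forall>i<n. avg_clust E (G i) \<ge> avg_clust E (G (Suc i))"
  proof -
    have "finite (S-{x})" "card (S-{x}) = n" using Suc.prems x(1) by auto
    then show ?thesis using Suc.IH[of "S-{x}"] that by blast
  qed
  define H where "H i = (if i = 0 then S else G (i - 1))" for i
  have H0: "H 0 = S" and HS: "\<And>j. H (Suc j) = G j" by (simp_all add: H_def)
  have A: "\<forall>i<Suc n. \<exists>y\<in>H i. H (Suc i) = H i - {y}"
  proof (intro allI impI)
    fix i assume i: "i < Suc n"
    show "\<exists>y\<in>H i. H (Suc i) = H i - {y}"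
    proof (cases i)
      case 0
      then show ?thesis using x(1) G(1) H0 HS by blast
    next
      case (Suc j)
      then have "j < n" using i by simp
      then have "\<exists>y\<in>G j. G (Suc j) = G j - {y}" using G(3) by blast
      then show ?thesis using Suc HS by simp
    qed
  qed
  have B: "\<forall>i<Suc n. avg_clust E (H i) \<ge> avg_clust E (H (Suc i))"
  proof (intro allI impI)
    fix i assume i: "i < Suc n"
    show "avg_clust E (H i) \<ge> avg_clust E (H (Suc i))"
    proof (cases i)
      case 0
      then show ?thesis using x(2) G(1) H0 HS by simp
    next
      case (Suc j)
      then have "j < n" using i by simp
      then have "avg_clust E (G j) \<ge> avg_clust E (G (Suc j))" using G(4) by blast
      then show ?thesis using Suc HS by simp
    qed
  qed
  have "H (Suc n) = {}" using HS G(2) by simp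
  then show ?case using A B H0 by blast
qed

theorem mainTheorem8:
  fixes V :: "'a set" and E :: "'a \<Rightarrow> 'a \<Rightarrow> bool" and N :: nat
  assumes "simple_graph V E"
    and "card V = N" and "N \<ge> 1"
  shows "\<exists>G :: nat \<Rightarrow> 'a set.
           G 0 = V \<and> G N = {} \<and>
           (\<forall>i<N. \<exists>x\<in>G i. G (Suc i) = G i - {x}) \<and>
           (\<forall>i<N. avg_clust E (G i) \<ge> avg_clust E (G (Suc i)))"
  using seq_exists[of E V N] assms by (simp add: simple_graph_def)

end
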